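(* Let $\mathcal{C}=(\mathcal{N},\Omega,P)$ satisfy exchangeability (if state $\omega'$ permutes $\omega$ then $P(\omega')=P(\omega)$) and the information assumption: (a) if $s_i=s^0$ then $P(v,s)=P(v,s_{-i})P(s_i)$, and (b) if $s_i\neq s^0$ then $V_i^d(s)>0$ if and only if $V_i^d(s_i)>0$. Then, for any state $\omega=(v,s)\in\Omega$, $P(\omega)=\lambda^{M(s)}(1-\lambda)^{n-M(s)}\sum_{s'\in C(s)}P_{\mathcal{I}}(v,s')$. Moreover, if $\sigma\in\Sigma^*$, then in each term of $\Pi_i(\mathcal{C},\sigma)=\sum_{g=0}^{\tau}\sum_{m=g}^{\tau+g}p_i(\sigma\mid g,m)P(M=m\mid S_i=s^0)Z(g,m)$, $P(M=m\mid S_i=s^0)$ depends only on $\lambda$, $p_i(\sigma\mid g,m)$ depends only on $\sigma$, and $Z(g,m)$ depends only on $P_{\mathcal{I}}$.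
   Context: $n$ voters (odd), $\tau=\frac{n-1}{2}$, two policies $p^*,p_*$ chosen by simple majority; finite state space $\Omega=\mathcal{V}^n\times\mathcal{S}^n$ with signal set $\mathcal{S}=\{s^0,\dots,s^K\}$, informative signals $\mathcal{M}=\{s^1,\dots,s^K\}$; $V_i^d=V_i^{p^*}-V_i^{p_*}$ and $V_i^d(E)$ its conditional expectation given event $E$. $\lambda=P(S_i\in\mathcal{M})$; $P_{\mathcal{I}}(\cdot)=P(\cdot\mid S\in\mathcal{M}^n)$; $M(s)$ is the number of voters with informative signals; $I(s)$ the set of such voters; $C(s)=\{s'\in\mathcal{M}^n: s'_i=s_i\ \forall i\in I(s)\}$. $\Sigma^*$ is the set of strategy profiles in which voters with good news (signals $s^k$ with $V_i^d(S_i=s^k)>0$) vote $p^*$ and voters with bad news vote $p_*$; $\sigma_i$ is voter $i$'s probability of voting $p^*$ on $s^0$. $\Pi_i(\mathcal{C},\sigma)$ is the expected payoff difference between voting $p^*$ and $p_*$ for voter $i$ with signal $s^0$; $p_i(\sigma\mid g,m)$ is the probability that exactly $\tau$ of the other voters vote $p^*$ given $G=g$ others with good news, $M=m$ others informed, and $S_i=s^0$; $Z(g,m)=P(G=g\mid M=m)V_i^d(G=g,M=m,S_i=s^0)$. *)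

theory Defs
  imports Complex_Main "HOL-Library.FuncSet" "HOL-Combinatorics.Permutations"
begin

(* Voters are 0,...,n-1.  A valuation v_i is a pair (V_i^{p*}, V_i^{p_*}) from a finite set Vs.
   Signals are 0..K; signal 0 is s^0 (uninformative), 1..K are the informative signals. *)
type_synonym state = "(nat \<Rightarrow> real \<times> real) \<times> (nat \<Rightarrow> nat)"

definition Om :: "nat \<Rightarrow> (real \<times> real) set \<Rightarrow> nat \<Rightarrow> state set" where
  "Om n Vs K = (PiE {..<n} (\<lambda>_. Vs)) \<times> (PiE {..<n} (\<lambda>_. {0..K}))"

definition tau :: "nat \<Rightarrow> nat" where
  "tau n = (n - 1) div 2"

definition prb :: "nat \<Rightarrow> (real \<times> real) set \<Rightarrow> nat \<Rightarrow> (state \<Rightarrow> real) \<Rightarrow> state set \<Rightarrow> real" where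
  "prb n Vs K P E = (\<Sum>\<omega>\<in>Om n Vs K \<inter> E. P \<omega>)"

definition cprob :: "nat \<Rightarrow> (real \<times> real) set \<Rightarrow> nat \<Rightarrow> (state \<Rightarrow> real) \<Rightarrow> state set \<Rightarrow> state set \<Rightarrow> real" where
  "cprob n Vs K P A B = prb n Vs K P (A \<inter> B) / prb n Vs K P B"

definition cexp :: "nat \<Rightarrow> (real \<times> real) set \<Rightarrow> nat \<Rightarrow> (state \<Rightarrow> real) \<Rightarrow> (state \<Rightarrow> real) \<Rightarrow> state set \<Rightarrow> real" where
  "cexp n Vs K P X E = (\<Sum>\<omega>\<in>Om n Vs K \<inter> E. P \<omega> * X \<omega>) / prb n Vs K P E"

definition Vd :: "nat \<Rightarrow> state \<Rightarrow> real" where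
  "Vd i \<omega> = fst (fst \<omega> i) - snd (fst \<omega> i)"

definition is_pmf :: "nat \<Rightarrow> (real \<times> real) set \<Rightarrow> nat \<Rightarrow> (state \<Rightarrow> real) \<Rightarrow> bool" where
  "is_pmf n Vs K P \<longleftrightarrow> (\<forall>\<omega>\<in>Om n Vs K. 0 \<le> P \<omega>) \<and> (\<Sum>\<omega>\<in>Om n Vs K. P \<omega>) = 1"

definition exchangeable :: "nat \<Rightarrow> (real \<times> real) set \<Rightarrow> nat \<Rightarrow> (state \<Rightarrow> real) \<Rightarrow> bool" where
  "exchangeable n Vs K P \<longleftrightarrow>
     (\<forall>\<pi> v s. \<pi> permutes {..<n} \<longrightarrow> (v, s) \<in> Om n Vs K \<longrightarrow> P (v \<circ> \<pi>, s \<circ> \<pi>) = P (v, s))"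

definition info_assumption :: "nat \<Rightarrow> (real \<times> real) set \<Rightarrow> nat \<Rightarrow> (state \<Rightarrow> real) \<Rightarrow> bool" where
  "info_assumption n Vs K P \<longleftrightarrow>
     (\<forall>i<n. \<forall>v s. (v, s) \<in> Om n Vs K \<longrightarrow> s i = 0 \<longrightarrow>
        P (v, s) = (\<Sum>t\<in>{0..K}. P (v, s(i := t))) * prb n Vs K P {\<omega>. snd \<omega> i = 0})
   \<and> (\<forall>i<n. \<forall>v s. (v, s) \<in> Om n Vs K \<longrightarrow> s i \<noteq> 0 \<longrightarrow>
        prb n Vs K P {\<omega>. snd \<omega> = s} > 0 \<longrightarrow>
        (cexp n Vs K P (Vd i) {\<omega>. snd \<omega> = s} > 0 \<longleftrightarrow>
         cexp n Vs K P (Vd i) {\<omega>. snd \<omega> i = s i} > 0))"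

(* lambda = P(S_i in M); by exchangeability independent of i, we use voter 0 *)
definition lam :: "nat \<Rightarrow> (real \<times> real) set \<Rightarrow> nat \<Rightarrow> (state \<Rightarrow> real) \<Rightarrow> real" where
  "lam n Vs K P = prb n Vs K P {\<omega>. snd \<omega> 0 \<noteq> 0}"

definition PI :: "nat \<Rightarrow> (real \<times> real) set \<Rightarrow> nat \<Rightarrow> (state \<Rightarrow> real) \<Rightarrow> state \<Rightarrow> real" where
  "PI n Vs K P \<omega> =
     (if \<forall>i<n. snd \<omega> i \<noteq> 0
      then P \<omega> / prb n Vs K P {\<omega>'. \<forall>i<n. snd \<omega>' i \<noteq> 0} else 0)"

definition Msig :: "nat \<Rightarrow> (nat \<Rightarrow> nat) \<Rightarrow> nat" where
  "Msig n s = card {i. i < n \<and> s i \<noteq> 0}"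

definition Cset :: "nat \<Rightarrow> nat \<Rightarrow> (nat \<Rightarrow> nat) \<Rightarrow> (nat \<Rightarrow> nat) set" where
  "Cset n K s = {s' \<in> PiE {..<n} (\<lambda>_. {1..K}). \<forall>i<n. s i \<noteq> 0 \<longrightarrow> s' i = s i}"

definition good_news :: "nat \<Rightarrow> (real \<times> real) set \<Rightarrow> nat \<Rightarrow> (state \<Rightarrow> real) \<Rightarrow> nat \<Rightarrow> nat \<Rightarrow> bool" where
  "good_news n Vs K P j k \<longleftrightarrow> k \<noteq> 0 \<and> cexp n Vs K P (Vd j) {\<omega>. snd \<omega> j = k} > 0"

definition Gcnt :: "nat \<Rightarrow> (real \<times> real) set \<Rightarrow> nat \<Rightarrow> (state \<Rightarrow> real) \<Rightarrow> nat \<Rightarrow> state \<Rightarrow> nat" where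
  "Gcnt n Vs K P i \<omega> = card {j. j < n \<and> j \<noteq> i \<and> good_news n Vs K P j (snd \<omega> j)}"

definition Mcnt :: "nat \<Rightarrow> nat \<Rightarrow> state \<Rightarrow> nat" where
  "Mcnt n i \<omega> = card {j. j < n \<and> j \<noteq> i \<and> snd \<omega> j \<noteq> 0}"

definition Ev :: "nat \<Rightarrow> (real \<times> real) set \<Rightarrow> nat \<Rightarrow> (state \<Rightarrow> real) \<Rightarrow> nat \<Rightarrow> nat \<Rightarrow> nat \<Rightarrow> state set" where
  "Ev n Vs K P i g m =
     {\<omega>. Gcnt n Vs K P i \<omega> = g \<and> Mcnt n i \<omega> = m \<and> snd \<omega> i = 0}"

definition exact_yes :: "(nat \<Rightarrow> real) \<Rightarrow> nat set \<Rightarrow> nat \<Rightarrow> real" where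
  "exact_yes \<sigma> U k = (\<Sum>A\<in>{A. A \<subseteq> U \<and> card A = k}. (\<Prod>j\<in>A. \<sigma> j) * (\<Prod>j\<in>U - A. 1 - \<sigma> j))"

(* p_i(sigma | g, m), for the profile in Sigma^* determined by sigma: voters with good news vote p*,
   voters with bad news vote p_*, voter j with signal s^0 votes p* with probability sigma j.
   It is the probability that exactly tau of the other voters vote p*, given G = g, M = m, S_i = s^0. *)
definition pivot_prob :: "nat \<Rightarrow> (real \<times> real) set \<Rightarrow> nat \<Rightarrow> (state \<Rightarrow> real) \<Rightarrow> (nat \<Rightarrow> real)
     \<Rightarrow> nat \<Rightarrow> nat \<Rightarrow> nat \<Rightarrow> real" where
  "pivot_prob n Vs K P \<sigma> i g m =
     (\<Sum>\<omega>\<in>Om n Vs K \<inter> Ev n Vs K P i g m.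
        P \<omega> * (if Gcnt n Vs K P i \<omega> \<le> tau n
               then exact_yes \<sigma> {j. j < n \<and> j \<noteq> i \<and> snd \<omega> j = 0} (tau n - Gcnt n Vs K P i \<omega>)
               else 0))
     / prb n Vs K P (Ev n Vs K P i g m)"

definition Zfun :: "nat \<Rightarrow> (real \<times> real) set \<Rightarrow> nat \<Rightarrow> (state \<Rightarrow> real) \<Rightarrow> nat \<Rightarrow> nat \<Rightarrow> nat \<Rightarrow> real" where
  "Zfun n Vs K P i g m =
     cprob n Vs K P {\<omega>. Gcnt n Vs K P i \<omega> = g} {\<omega>. Mcnt n i \<omega> = m}
     * cexp n Vs K P (Vd i) (Ev n Vs K P i g m)"

end

theory Submission
  imports Defs
begin

definition Tp :: "(nat \<Rightarrow> nat) \<Rightarrow> state \<Rightarrow> state" where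
  "Tp p \<omega> = (fst \<omega> \<circ> p, snd \<omega> \<circ> p)"

definition mask :: "nat set \<Rightarrow> state \<Rightarrow> state" where
  "mask Z \<omega> = (fst \<omega>, \<lambda>j. if j \<in> Z then 0 else snd \<omega> j)"

definition OmI :: "nat \<Rightarrow> (real \<times> real) set \<Rightarrow> nat \<Rightarrow> state set" where
  "OmI n Vs K = Om n Vs K \<inter> {\<omega>. \<forall>i<n. snd \<omega> i \<noteq> 0}"

lemma finite_Om: "finite Vs \<Longrightarrow> finite (Om n Vs K)"
  unfolding Om_def by (intro finite_cartesian_product finite_PiE) auto

lemma Om_Tp:
  assumes "p permutes {..<n}" "\<omega> \<in> Om n Vs K"
  shows "Tp p \<omega> \<in> Om n Vs K"
proof -
  obtain v s where w: "\<omega> = (v, s)" by (cases \<omega>)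
  have pin: "\<And>x. (p x < n) = (x < n)" using permutes_in_image[OF assms(1)] by simp
  have pout: "\<And>x. \<not> x < n \<Longrightarrow> p x = x" using permutes_not_in[OF assms(1)] by simp
  show ?thesis using assms(2) unfolding w Tp_def Om_def
    by (auto simp: PiE_def Pi_def extensional_def pin pout)
qed

lemma Tp_inv: "p permutes S \<Longrightarrow> Tp (inv p) (Tp p \<omega>) = \<omega>"
  "p permutes S \<Longrightarrow> Tp p (Tp (inv p) \<omega>) = \<omega>"
  by (auto simp: Tp_def comp_assoc permutes_inv_o)

lemma sum_Tp:
  assumes "p permutes {..<n}" "exchangeable n Vs K P"
  shows "(\<Sum>\<omega>\<in>Om n Vs K \<inter> E. P \<omega> * f \<omega>)
       = (\<Sum>\<omega>\<in>Om n Vs K \<inter> {\<omega>. Tp p \<omega> \<in> E}. P \<omega> * f (Tp p \<omega>))"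
proof (rule sum.reindex_bij_witness[where j = "Tp (inv p)" and i = "Tp p"], goal_cases)
  case (1 a) then show ?case using Tp_inv[OF assms(1)] by simp
next
  case (2 a) then show ?case using Tp_inv[OF assms(1)] Om_Tp[OF permutes_inv[OF assms(1)]] by auto
next
  case (3 b) then show ?case using Tp_inv[OF assms(1)] by simp
next
  case (4 b) then show ?case using Om_Tp[OF assms(1)] by auto
next
  case (5 a)
  have "Tp (inv p) a \<in> Om n Vs K" using 5 Om_Tp[OF permutes_inv[OF assms(1)]] by auto
  then have "P (Tp p (Tp (inv p) a)) = P (Tp (inv p) a)"
    using assms(2) unfolding exchangeable_def Tp_def
    by (metis assms(1) prod.collapse)
  then show ?case using Tp_inv[OF assms(1)] by simp
qed

definition Ext :: "nat \<Rightarrow> nat \<Rightarrow> (nat \<Rightarrow> nat) \<Rightarrow> nat set \<Rightarrow> (nat \<Rightarrow> nat) set" where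
  "Ext n K s J = {t \<in> PiE {..<n} (\<lambda>_. {0..K}). (\<forall>j\<in>J. t j \<noteq> 0) \<and> (\<forall>j. j \<notin> J \<longrightarrow> t j = s j)}"

definition zs :: "nat \<Rightarrow> (nat \<Rightarrow> nat) \<Rightarrow> nat set" where
  "zs n s = {j. j < n \<and> s j = 0}"

lemma finite_Cset: "finite (Cset n K s)"
  unfolding Cset_def by (rule finite_subset[OF _ finite_PiE[of "{..<n}" "\<lambda>_. {1..K}"]]) auto

lemma finite_OmI: "finite Vs \<Longrightarrow> finite (OmI n Vs K)"
  unfolding OmI_def using finite_Om by blast

lemma REP0:
  fixes h :: "nat set \<Rightarrow> real" and g f :: "state \<Rightarrow> real"
  assumes "finite Vs"
  shows "(\<Sum>\<omega>\<in>Om n Vs K. h (zs n (snd \<omega>)) * (\<Sum>t\<in>Cset n K (snd \<omega>). g (fst \<omega>, t)) * f \<omega>)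
       = (\<Sum>Z\<in>Pow {..<n}. h Z * (\<Sum>\<omega>\<in>OmI n Vs K. g \<omega> * f (mask Z \<omega>)))"
proof -
  have ex: "\<And>a b. h (zs n b) * (\<Sum>t\<in>Cset n K b. g (a, t)) * f (a, b) = (\<Sum>t\<in>Cset n K b. h (zs n b) * g (a, t) * f (a, b))"
    by (metis (no_types) sum_distrib_left sum_distrib_right)
  have L: "(\<Sum>\<omega>\<in>Om n Vs K. h (zs n (snd \<omega>)) * (\<Sum>t\<in>Cset n K (snd \<omega>). g (fst \<omega>, t)) * f \<omega>)
     = (\<Sum>(\<omega>, t)\<in>Sigma (Om n Vs K) (\<lambda>\<omega>. Cset n K (snd \<omega>)). h (zs n (snd \<omega>)) * g (fst \<omega>, t) * f \<omega>)"
    by (subst sum.Sigma[symmetric]) (auto simp: finite_Om[OF assms] finite_Cset intro!: sum.cong ex)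
  have R: "(\<Sum>Z\<in>Pow {..<n}. h Z * (\<Sum>\<omega>\<in>OmI n Vs K. g \<omega> * f (mask Z \<omega>)))
     = (\<Sum>(Z, \<omega>)\<in>Pow {..<n} \<times> OmI n Vs K. h Z * g \<omega> * f (mask Z \<omega>))"
    by (subst sum.cartesian_product[symmetric]) (auto simp: sum_distrib_left mult.assoc)
  have "(\<Sum>(Z, \<omega>)\<in>Pow {..<n} \<times> OmI n Vs K. h Z * g \<omega> * f (mask Z \<omega>))
      = (\<Sum>(\<omega>, t)\<in>Sigma (Om n Vs K) (\<lambda>\<omega>. Cset n K (snd \<omega>)). h (zs n (snd \<omega>)) * g (fst \<omega>, t) * f \<omega>)"
  proof (rule sum.reindex_bij_witness[where j = "\<lambda>(Z, \<omega>). (mask Z \<omega>, snd \<omega>)"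
        and i = "\<lambda>(\<omega>, t). (zs n (snd \<omega>), (fst \<omega>, t))"], goal_cases)
    case (1 a)
    obtain Z v t where a: "a = (Z, (v, t))" by (metis prod.collapse)
    have "zs n (\<lambda>j. if j \<in> Z then 0 else t j) = Z"
      using 1 unfolding a zs_def OmI_def by auto
    moreover have "mask Z (v, t) = (v, \<lambda>j. if j \<in> Z then 0 else t j)" by (simp add: mask_def cong: if_cong)
    ultimately show ?case unfolding a by simp
  next
    case (2 a)
    obtain Z v t where a: "a = (Z, (v, t))" by (metis prod.collapse)
    show ?case using 2 unfolding a mask_def OmI_def Om_def Cset_def
      by (auto simp: PiE_def Pi_def extensional_def subset_eq)
  next
    case (3 b)
    obtain v s t where b: "b = ((v, s), t)" by (metis prod.collapse)
    have "(\<lambda>j. if j \<in> zs n s then 0 else t j) = s"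
    proof
      fix j show "(if j \<in> zs n s then 0 else t j) = s j"
        using 3 unfolding b zs_def Om_def Cset_def by (cases "j < n") (auto simp: PiE_def extensional_def)
    qed
    then show ?case unfolding b by (simp add: mask_def cong: if_cong)
  next
    case (4 b)
    obtain v s t where b: "b = ((v, s), t)" by (metis prod.collapse)
    show ?case using 4 unfolding b zs_def OmI_def Om_def Cset_def
      by (auto simp: PiE_def Pi_def)
  next
    case (5 a)
    obtain Z v t where a: "a = (Z, (v, t))" by (metis prod.collapse)
    have "zs n (\<lambda>j. if j \<in> Z then 0 else t j) = Z"
      using 5 unfolding a zs_def OmI_def by auto
    then show ?case unfolding a by (simp add: mask_def cong: if_cong)
  qed
  then show ?thesis using L R by simp
qed

lemma sum_pow_card:
  fixes x :: real
  assumes "finite A"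
  shows "(\<Sum>Z\<in>Pow A. x ^ card Z) = (1 + x) ^ card A"
  using assms
proof (induction A rule: finite_induct)
  case empty then show ?case by simp
next
  case (insert a A)
  have "(\<Sum>Z\<in>Pow (insert a A). x ^ card Z) = (\<Sum>Z\<in>Pow A. x ^ card Z) + (\<Sum>Z\<in>insert a ` Pow A. x ^ card Z)"
    unfolding Pow_insert
    by (rule sum.union_disjoint) (use insert in auto)
  also have "(\<Sum>Z\<in>insert a ` Pow A. x ^ card Z) = (\<Sum>Z\<in>Pow A. x ^ card (insert a Z))"
    by (subst sum.reindex) (use insert in \<open>auto simp: inj_on_def insert_ident dest: finite_subset\<close>)
  also have "\<dots> = (\<Sum>Z\<in>Pow A. x * x ^ card Z)"
  proof (intro sum.cong refl)
    fix Z assume "Z \<in> Pow A"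
    then have "finite Z" "a \<notin> Z" using insert finite_subset by auto
    then show "x ^ card (insert a Z) = x * x ^ card Z" by simp
  qed
  finally show ?case using insert by (simp add: sum_distrib_left[symmetric] algebra_simps)
qed

lemma hlp1:
  fixes l q P S :: real
  assumes "0 < l" "l ^ c * P = q ^ c * S"
  shows "P = (q / l) ^ c * S"
proof -
  have nz: "l ^ c \<noteq> 0" using assms by simp
  have "P = (q ^ c * S) / l ^ c" using assms(2) nz by (simp add: eq_divide_eq mult.commute)
  then show ?thesis by (simp add: power_divide)
qed

lemma hlp2:
  fixes l D :: real
  assumes "0 < l" "1 = (1 / l) ^ n * D"
  shows "D = l ^ n"
proof -
  have nz: "l ^ n \<noteq> 0" using assms by simp
  have e: "(1 / l) ^ n * D = D / l ^ n" by (simp add: power_one_over)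
  have "1 = D / l ^ n" using assms(2) unfolding e .
  then have "l ^ n = D" using nz by (simp add: eq_divide_eq)
  then show ?thesis by simp
qed

lemma hlp3:
  fixes l q P S1 S2 :: real
  assumes "0 < l" "P = (q / l) ^ k * S1" "S1 = L * S2" "L = l ^ M * l ^ k"
  shows "P = l ^ M * q ^ k * S2"
proof -
  have nz: "l ^ k \<noteq> 0" using assms by simp
  have "P = (q ^ k / l ^ k) * (l ^ M * l ^ k * S2)" using assms by (simp add: power_divide)
  also have "\<dots> = l ^ M * q ^ k * S2" using nz assms(1) by simp
  finally show ?thesis .
qed

lemma sum_ind:
  fixes P h :: "state \<Rightarrow> real"
  assumes "finite Vs"
  shows "(\<Sum>\<omega>\<in>Om n Vs K \<inter> E. P \<omega> * h \<omega>) = (\<Sum>\<omega>\<in>Om n Vs K. P \<omega> * (if \<omega> \<in> E then h \<omega> else 0))"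
  by (subst sum.inter_restrict[OF finite_Om[OF assms]]) (auto intro!: sum.cong)

lemma prb_ind:
  assumes "finite Vs"
  shows "prb n Vs K P E = (\<Sum>\<omega>\<in>Om n Vs K. P \<omega> * (if \<omega> \<in> E then 1 else 0))"
  unfolding prb_def using sum_ind[OF assms, where E=E and P=P and h="\<lambda>_. 1"] by simp

lemma Mcnt_mask:
  assumes "\<omega> \<in> OmI n Vs K"
  shows "Mcnt n i (mask Z \<omega>) = card ({..<n} - {i} - Z)"
proof -
  have "{j. j < n \<and> j \<noteq> i \<and> snd (mask Z \<omega>) j \<noteq> 0} = {..<n} - {i} - Z"
    using assms unfolding OmI_def mask_def by auto
  then show ?thesis unfolding Mcnt_def by simp
qed

lemma snd_mask: "\<omega> \<in> OmI n Vs K \<Longrightarrow> i < n \<Longrightarrow> (snd (mask Z \<omega>) i = 0) = (i \<in> Z)"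
  unfolding OmI_def mask_def by auto

lemma fst_mask: "fst (mask Z \<omega>) = fst \<omega>"
  unfolding mask_def by simp

lemma Vd_mask: "Vd i (mask Z \<omega>) = Vd i \<omega>"
  unfolding Vd_def mask_def by simp

lemma Gcnt_upd: "Gcnt n Vs K P i (v, s(i := t)) = Gcnt n Vs K P i (v, s)"
proof -
  have "{j. j < n \<and> j \<noteq> i \<and> good_news n Vs K P j ((s(i := t)) j)} = {j. j < n \<and> j \<noteq> i \<and> good_news n Vs K P j (s j)}"
    by auto
  then show ?thesis unfolding Gcnt_def by simp
qed

lemma Mcnt_upd: "Mcnt n i (v, s(i := t)) = Mcnt n i (v, s)"
proof -
  have "{j. j < n \<and> j \<noteq> i \<and> (s(i := t)) j \<noteq> 0} = {j. j < n \<and> j \<noteq> i \<and> s j \<noteq> 0}"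
    by auto
  then show ?thesis unfolding Mcnt_def by simp
qed

lemma card_rest:
  assumes "i < n" "Z \<subseteq> {..<n} - {i}"
  shows "card ({..<n} - {i} - Z) = n - 1 - card Z"
proof -
  have "card ({..<n} - {i}) = n - 1" using assms by simp
  then show ?thesis using assms by (simp add: card_Diff_subset finite_subset)
qed

lemma perm_exists:
  fixes n i :: nat
  assumes i: "i < n" and Y: "Y \<subseteq> {..<n} - {i}" and Y': "Y' \<subseteq> {..<n} - {i}" and c: "card Y = card Y'"
  shows "\<exists>p. p permutes {..<n} \<and> p i = i \<and> p ` Y = Y'"
proof -
  define O1 where "O1 = {..<n} - {i}"
  have fO: "finite O1" unfolding O1_def by simp
  have fY: "finite Y" "finite Y'" using Y Y' by (auto intro: finite_subset)
  obtain f where f: "bij_betw f Y Y'" using finite_same_card_bij[OF fY c] by blast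
  have c2: "card (O1 - Y) = card (O1 - Y')"
    using Y Y' c fO unfolding O1_def by (simp add: card_Diff_subset fY)
  obtain g where g: "bij_betw g (O1 - Y) (O1 - Y')"
    using finite_same_card_bij[OF _ _ c2] fO by blast
  define p where "p x = (if x \<in> Y then f x else if x \<in> O1 - Y then g x else x)" for x
  have p1: "bij_betw p Y Y'" using f by (subst bij_betw_cong[of Y p f]) (auto simp: p_def)
  have p2: "bij_betw p (O1 - Y) (O1 - Y')" using g by (subst bij_betw_cong[of "O1 - Y" p g]) (auto simp: p_def)
  have "bij_betw p (Y \<union> (O1 - Y)) (Y' \<union> (O1 - Y'))" by (rule bij_betw_combine[OF p1 p2]) auto
  moreover have "Y \<union> (O1 - Y) = O1" "Y' \<union> (O1 - Y') = O1" using Y Y' unfolding O1_def by auto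
  ultimately have "bij_betw p O1 O1" by simp
  then have "p permutes O1" by (rule bij_imp_permutes) (use Y in \<open>auto simp: p_def O1_def\<close>)
  then have "p permutes {..<n}" by (rule permutes_subset) (auto simp: O1_def)
  moreover have "p i = i" using Y unfolding p_def O1_def by auto
  moreover have "p ` Y = Y'" using p1 by (simp add: bij_betw_def)
  ultimately show ?thesis by blast
qed

lemma card_perm:
  fixes n i :: nat
  assumes p: "p permutes {..<n}" and pi: "p i = i" and Q: "\<And>j. j < n \<Longrightarrow> Q' j = Q (p j)"
  shows "card {j. j < n \<and> j \<noteq> i \<and> Q' j} = card {j. j < n \<and> j \<noteq> i \<and> Q j}"
proof -
  have inj: "inj p" using permutes_inj[OF p] .
  have "p ` {j. j < n \<and> j \<noteq> i \<and> Q' j} = {j. j < n \<and> j \<noteq> i \<and> Q j}"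
  proof (intro set_eqI iffI)
    fix x assume "x \<in> p ` {j. j < n \<and> j \<noteq> i \<and> Q' j}"
    then obtain j where j: "x = p j" "j < n" "j \<noteq> i" "Q' j" by blast
    have "p j \<noteq> i" using j(3) pi inj by (metis injD)
    then show "x \<in> {j. j < n \<and> j \<noteq> i \<and> Q j}" using j Q permutes_in_image[OF p, of j] by auto
  next
    fix x assume x: "x \<in> {j. j < n \<and> j \<noteq> i \<and> Q j}"
    define j where "j = inv p x"
    have xj: "x = p j" unfolding j_def using permutes_inverses[OF p] by simp
    have "j < n" using x xj permutes_in_image[OF p, of j] by auto
    moreover have "j \<noteq> i" using x xj pi by auto
    moreover have "Q' j" using x xj Q \<open>j < n\<close> by auto
    ultimately show "x \<in> p ` {j. j < n \<and> j \<noteq> i \<and> Q' j}" using xj by blast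
  qed
  then show ?thesis using card_image[of p "{j. j < n \<and> j \<noteq> i \<and> Q' j}"] inj
    by (metis inj_on_subset subset_UNIV)
qed

definition Uset :: "nat \<Rightarrow> nat \<Rightarrow> state \<Rightarrow> nat set" where
  "Uset n i \<omega> = {j. j < n \<and> j \<noteq> i \<and> snd \<omega> j = 0}"

lemma card_Uset:
  assumes "i < n"
  shows "card (Uset n i \<omega>) + Mcnt n i \<omega> = n - 1"
proof -
  define A where "A = Uset n i \<omega>"
  define B where "B = {j. j < n \<and> j \<noteq> i \<and> snd \<omega> j \<noteq> 0}"
  have u: "A \<union> B = {..<n} - {i}" unfolding A_def B_def Uset_def by auto
  have fA: "finite A" unfolding A_def Uset_def by simp
  have fB: "finite B" unfolding B_def by simp
  have d: "A \<inter> B = {}" unfolding A_def B_def Uset_def by auto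
  have "card (A \<union> B) = card A + card B" by (rule card_Un_disjoint[OF fA fB d])
  moreover have "card ({..<n} - {i}) = n - 1" using assms by simp
  ultimately show ?thesis unfolding Mcnt_def A_def[symmetric] B_def[symmetric] using u by simp
qed

locale vm =
  fixes n :: nat and Vs :: "(real \<times> real) set" and K :: nat and P :: "state \<Rightarrow> real"
  assumes fin: "finite Vs" and npos: "0 < n" and pmf: "is_pmf n Vs K P"
    and exch: "exchangeable n Vs K P" and info: "info_assumption n Vs K P"
begin

abbreviation "lm \<equiv> lam n Vs K P"

lemma finOm: "finite (Om n Vs K)" using finite_Om[OF fin] .

lemma prb_Tp:
  assumes "p permutes {..<n}"
  shows "prb n Vs K P E = prb n Vs K P {\<omega>. Tp p \<omega> \<in> E}"
  using sum_Tp[OF assms exch, where E=E and f="\<lambda>_. 1"] unfolding prb_def by simp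

lemma q_i:
  assumes "i < n"
  shows "prb n Vs K P {\<omega>. snd \<omega> i = 0} = 1 - lm"
proof -
  have p: "transpose 0 i permutes {..<n}" using assms npos by (intro permutes_swap_id) auto
  have e: "{\<omega>. Tp (transpose 0 i) \<omega> \<in> {\<omega>. snd \<omega> 0 = 0}} = {\<omega>. snd \<omega> i = 0}"
    by (auto simp: Tp_def)
  have 1: "prb n Vs K P {\<omega>. snd \<omega> i = 0} = prb n Vs K P {\<omega>. snd \<omega> 0 = 0}"
    using prb_Tp[OF p, of "{\<omega>. snd \<omega> 0 = 0}"] e by simp
  have "(\<Sum>\<omega>\<in>Om n Vs K. P \<omega>) = (\<Sum>\<omega>\<in>Om n Vs K \<inter> {\<omega>. snd \<omega> 0 = 0}. P \<omega>) + (\<Sum>\<omega>\<in>Om n Vs K - {\<omega>. snd \<omega> 0 = 0}. P \<omega>)"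
    using sum.Int_Diff[OF finOm] by blast
  moreover have "Om n Vs K - {\<omega>. snd \<omega> 0 = 0} = Om n Vs K \<inter> {\<omega>. snd \<omega> 0 \<noteq> 0}" by auto
  ultimately have "1 = prb n Vs K P {\<omega>. snd \<omega> 0 = 0} + lm"
    using pmf unfolding is_pmf_def prb_def lam_def by simp
  then show ?thesis using 1 by simp
qed

lemma a_pt:
  assumes "i < n" "(v, s) \<in> Om n Vs K" "s i = 0"
  shows "lm * P (v, s) = (1 - lm) * (\<Sum>t\<in>{1..K}. P (v, s(i := t)))"
proof -
  have "P (v, s) = (\<Sum>t\<in>{0..K}. P (v, s(i := t))) * (1 - lm)"
    using info assms q_i[OF assms(1)] unfolding info_assumption_def by simp
  also have "(\<Sum>t\<in>{0..K}. P (v, s(i := t))) = P (v, s) + (\<Sum>t\<in>{1..K}. P (v, s(i := t)))"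
    using assms(3) by (subst sum.atLeast_Suc_atMost) (auto simp: fun_upd_idem)
  finally show ?thesis by (simp add: algebra_simps)
qed

lemma Jlem:
  assumes "finite J"
  shows "\<forall>v s. (v, s) \<in> Om n Vs K \<longrightarrow> J \<subseteq> {j. j < n \<and> s j = 0} \<longrightarrow>
     lm ^ card J * P (v, s) = (1 - lm) ^ card J * (\<Sum>t\<in>Ext n K s J. P (v, t))"
  using assms
proof (induction J rule: finite_induct)
  case empty
  show ?case
  proof (intro allI impI)
    fix v s assume "(v, s) \<in> Om n Vs K"
    then have "Ext n K s {} = {s}" unfolding Ext_def Om_def by auto
    then show "lm ^ card {} * P (v, s) = (1 - lm) ^ card {} * (\<Sum>t\<in>Ext n K s {}. P (v, t))" by simp
  qed
next
  case (insert a J)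
  show ?case
  proof (intro allI impI)
    fix v s assume vs: "(v, s) \<in> Om n Vs K" and sub: "insert a J \<subseteq> {j. j < n \<and> s j = 0}"
    have an: "a < n" "s a = 0" using sub by auto
    have finE: "finite (Ext n K s' J')" for s' J'
      unfolding Ext_def by (rule finite_subset[OF _ finite_PiE[of "{..<n}" "\<lambda>_. {0..K}"]]) auto
    have vsk: "(v, s(a := k)) \<in> Om n Vs K" if "k \<in> {1..K}" for k
      using vs that an unfolding Om_def by (auto simp: PiE_def Pi_def extensional_def)
    have subk: "J \<subseteq> {j. j < n \<and> (s(a := k)) j = 0}" for k using sub insert(2) by auto
    have grp: "(\<Sum>t\<in>Ext n K s (insert a J). P (v, t))
        = (\<Sum>k\<in>{1..K}. \<Sum>t\<in>{t \<in> Ext n K s (insert a J). t a = k}. P (v, t))"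
    proof (rule sum.group[symmetric])
      show "finite (Ext n K s (insert a J))" by (rule finE)
      show "(\<lambda>t. t a) ` Ext n K s (insert a J) \<subseteq> {1..K}"
        using an unfolding Ext_def by (force simp: PiE_def Pi_def)
    qed auto
    have ek: "{t \<in> Ext n K s (insert a J). t a = k} = Ext n K (s(a := k)) J" if "k \<in> {1..K}" for k
      using that insert(2) unfolding Ext_def by auto
    have IHk: "lm ^ card J * P (v, s(a := k)) = (1 - lm) ^ card J * (\<Sum>t\<in>Ext n K (s(a := k)) J. P (v, t))"
      if "k \<in> {1..K}" for k using insert.IH vsk[OF that] subk by blast
    have "lm ^ card (insert a J) * P (v, s) = lm ^ card J * (lm * P (v, s))"
      using insert by simp
    also have "\<dots> = (1 - lm) * (\<Sum>k\<in>{1..K}. lm ^ card J * P (v, s(a := k)))"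
      using a_pt[OF an(1) vs an(2)] by (simp add: sum_distrib_left algebra_simps)
    also have "\<dots> = (1 - lm) * (\<Sum>k\<in>{1..K}. (1 - lm) ^ card J * (\<Sum>t\<in>Ext n K (s(a := k)) J. P (v, t)))"
      using IHk by (intro arg_cong[where f = "\<lambda>x. (1 - lm) * x"] sum.cong) auto
    also have "\<dots> = (1 - lm) ^ card (insert a J) * (\<Sum>k\<in>{1..K}. \<Sum>t\<in>Ext n K (s(a := k)) J. P (v, t))"
      using insert by (simp add: sum_distrib_left mult.assoc)
    also have "\<dots> = (1 - lm) ^ card (insert a J) * (\<Sum>t\<in>Ext n K s (insert a J). P (v, t))"
      unfolding grp using ek by simp
    finally show "lm ^ card (insert a J) * P (v, s) = (1 - lm) ^ card (insert a J) * (\<Sum>t\<in>Ext n K s (insert a J). P (v, t))" .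
  qed
qed


lemma Ext_zs:
  assumes "(v, s) \<in> Om n Vs K"
  shows "Ext n K s (zs n s) = Cset n K s"
proof (intro set_eqI iffI)
  have sP: "s \<in> PiE {..<n} (\<lambda>_. {0..K})" using assms unfolding Om_def by auto
  fix t
  {
    assume t: "t \<in> Ext n K s (zs n s)"
    have tP: "t \<in> PiE {..<n} (\<lambda>_. {0..K})" using t unfolding Ext_def by blast
    have t1: "t j \<noteq> 0" if "j \<in> zs n s" for j using t that unfolding Ext_def by blast
    have t2: "t j = s j" if "j \<notin> zs n s" for j using t that unfolding Ext_def by blast
    have "t j \<in> {1..K}" if "j < n" for j
    proof (cases "s j = 0")
      case True
      then have "j \<in> zs n s" using that unfolding zs_def by blast
      then have "t j \<noteq> 0" by (rule t1)
      moreover have "t j \<in> {0..K}" using PiE_mem[OF tP, of j] that by blast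
      ultimately show ?thesis by simp
    next
      case False
      then have "j \<notin> zs n s" unfolding zs_def by blast
      then have "t j = s j" by (rule t2)
      moreover have "s j \<in> {0..K}" using PiE_mem[OF sP, of j] that by blast
      ultimately show ?thesis using False by simp
    qed
    moreover have "t j = undefined" if "\<not> j < n" for j
      by (rule PiE_arb[OF tP]) (use that in simp)
    ultimately have tP1: "t \<in> PiE {..<n} (\<lambda>_. {1..K})" by (intro PiE_I) auto
    have "\<forall>i<n. s i \<noteq> 0 \<longrightarrow> t i = s i"
    proof (intro allI impI)
      fix i assume "i < n" "s i \<noteq> 0"
      then have "i \<notin> zs n s" unfolding zs_def by blast
      then show "t i = s i" by (rule t2)
    qed
    then show "t \<in> Cset n K s" unfolding Cset_def using tP1 by blast
  }
  {
    assume t: "t \<in> Cset n K s"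
    have tP: "t \<in> PiE {..<n} (\<lambda>_. {1..K})" using t unfolding Cset_def by blast
    have t2: "t i = s i" if "i < n" "s i \<noteq> 0" for i using t that unfolding Cset_def by blast
    have "t j \<in> {0..K}" if "j < n" for j using PiE_mem[OF tP, of j] that by simp
    then have "t \<in> PiE {..<n} (\<lambda>_. {0..K})" using PiE_arb[OF tP] by (intro PiE_I) auto
    moreover have "\<forall>j\<in>zs n s. t j \<noteq> 0"
    proof
      fix j assume "j \<in> zs n s"
      then have "j < n" unfolding zs_def by blast
      then show "t j \<noteq> 0" using PiE_mem[OF tP, of j] by simp
    qed
    moreover have "\<forall>j. j \<notin> zs n s \<longrightarrow> t j = s j"
    proof (intro allI impI)
      fix j assume j: "j \<notin> zs n s"
      show "t j = s j"
      proof (cases "j < n")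
        case True
        then have "s j \<noteq> 0" using j unfolding zs_def by simp
        then show ?thesis using t2 True by blast
      next
        case False
        then show ?thesis using PiE_arb[OF tP, of j] PiE_arb[OF sP, of j] by simp
      qed
    qed
    ultimately show "t \<in> Ext n K s (zs n s)" unfolding Ext_def by blast
  }
qed

lemma card_zs: "card (zs n s) = n - Msig n s"
proof -
  have "zs n s = {..<n} - {i. i < n \<and> s i \<noteq> 0}" unfolding zs_def by auto
  then show ?thesis unfolding Msig_def by (simp add: card_Diff_subset subset_eq)
qed

lemma pt0: "(v, s) \<in> Om n Vs K \<Longrightarrow>
   lm ^ card (zs n s) * P (v, s) = (1 - lm) ^ card (zs n s) * (\<Sum>t\<in>Cset n K s. P (v, t))"
  using Jlem[of "zs n s"] Ext_zs[of v s] unfolding zs_def by auto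

context
  assumes lpos: "0 < lm"
begin

lemma pt1: "\<omega> \<in> Om n Vs K \<Longrightarrow>
   P \<omega> = ((1 - lm) / lm) ^ card (zs n (snd \<omega>)) * (\<Sum>t\<in>Cset n K (snd \<omega>). P (fst \<omega>, t))"
  using pt0[of "fst \<omega>" "snd \<omega>"] lpos by (intro hlp1) auto

lemma D_eq: "prb n Vs K P {\<omega>. \<forall>i<n. snd \<omega> i \<noteq> 0} = lm ^ n"
proof -
  have "1 = (\<Sum>\<omega>\<in>Om n Vs K. P \<omega>)" using pmf unfolding is_pmf_def by simp
  also have "\<dots> = (\<Sum>\<omega>\<in>Om n Vs K. ((1 - lm) / lm) ^ card (zs n (snd \<omega>)) * (\<Sum>t\<in>Cset n K (snd \<omega>). P (fst \<omega>, t)) * 1)"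
    using pt1 by (intro sum.cong) auto
  also have "\<dots> = (\<Sum>Z\<in>Pow {..<n}. ((1 - lm) / lm) ^ card Z * (\<Sum>\<omega>\<in>OmI n Vs K. P \<omega> * 1))"
    by (rule REP0[OF fin])
  also have "\<dots> = (1 + (1 - lm) / lm) ^ n * prb n Vs K P {\<omega>. \<forall>i<n. snd \<omega> i \<noteq> 0}"
    unfolding sum_distrib_right[symmetric] sum_pow_card[OF finite_lessThan] prb_def OmI_def by simp
  also have "(1 + (1 - lm) / lm) = 1 / lm" using lpos by (simp add: field_simps)
  finally have "1 = (1 / lm) ^ n * prb n Vs K P {\<omega>. \<forall>i<n. snd \<omega> i \<noteq> 0}" .
  then show ?thesis using lpos by (intro hlp2)
qed

lemma PI_OmI: "\<omega> \<in> OmI n Vs K \<Longrightarrow> P \<omega> = lm ^ n * PI n Vs K P \<omega>"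
  unfolding PI_def D_eq using lpos by (auto simp: OmI_def)

lemma sum_PI: "(\<Sum>\<omega>\<in>OmI n Vs K. PI n Vs K P \<omega>) = 1"
proof -
  have "(\<Sum>\<omega>\<in>OmI n Vs K. P \<omega>) = lm ^ n" using D_eq unfolding prb_def OmI_def by simp
  moreover have "(\<Sum>\<omega>\<in>OmI n Vs K. P \<omega>) = lm ^ n * (\<Sum>\<omega>\<in>OmI n Vs K. PI n Vs K P \<omega>)"
    using PI_OmI by (simp add: sum_distrib_left)
  ultimately show ?thesis using lpos by simp
qed

lemma part1: "\<omega> \<in> Om n Vs K \<Longrightarrow>
   P \<omega> = lm ^ Msig n (snd \<omega>) * (1 - lm) ^ (n - Msig n (snd \<omega>))
               * (\<Sum>s'\<in>Cset n K (snd \<omega>). PI n Vs K P (fst \<omega>, s'))"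
proof -
  assume w: "\<omega> \<in> Om n Vs K"
  define M where "M = Msig n (snd \<omega>)"
  have Mle: "M \<le> n" unfolding M_def Msig_def
    using card_mono[of "{..<n}" "{i. i < n \<and> snd \<omega> i \<noteq> 0}"] by auto
  have "(\<Sum>s'\<in>Cset n K (snd \<omega>). P (fst \<omega>, s')) = lm ^ n * (\<Sum>s'\<in>Cset n K (snd \<omega>). PI n Vs K P (fst \<omega>, s'))"
    unfolding sum_distrib_left
  proof (intro sum.cong refl PI_OmI)
    fix s' assume "s' \<in> Cset n K (snd \<omega>)"
    then show "(fst \<omega>, s') \<in> OmI n Vs K" using w unfolding Cset_def OmI_def Om_def
      by (auto simp: PiE_def Pi_def)
  qed
  moreover have "P \<omega> = ((1 - lm) / lm) ^ (n - M) * (\<Sum>s'\<in>Cset n K (snd \<omega>). P (fst \<omega>, s'))"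
    using pt1[OF w] card_zs unfolding M_def by simp
  moreover have "lm ^ n = lm ^ M * lm ^ (n - M)" using Mle by (simp add: power_add[symmetric])
  ultimately show ?thesis unfolding M_def[symmetric] using lpos by (intro hlp3)
qed

lemma REP: "(\<Sum>\<omega>\<in>Om n Vs K. P \<omega> * f \<omega>)
   = (\<Sum>Z\<in>Pow {..<n}. lm ^ (n - card Z) * (1 - lm) ^ card Z * (\<Sum>\<omega>\<in>OmI n Vs K. PI n Vs K P \<omega> * f (mask Z \<omega>)))"
proof -
  have "(\<Sum>\<omega>\<in>Om n Vs K. P \<omega> * f \<omega>) = (\<Sum>\<omega>\<in>Om n Vs K. ((1 - lm) / lm) ^ card (zs n (snd \<omega>)) * (\<Sum>t\<in>Cset n K (snd \<omega>). P (fst \<omega>, t)) * f \<omega>)"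
    using pt1 by (intro sum.cong) auto
  also have "\<dots> = (\<Sum>Z\<in>Pow {..<n}. ((1 - lm) / lm) ^ card Z * (\<Sum>\<omega>\<in>OmI n Vs K. P \<omega> * f (mask Z \<omega>)))"
    by (rule REP0[OF fin])
  also have "\<dots> = (\<Sum>Z\<in>Pow {..<n}. lm ^ (n - card Z) * (1 - lm) ^ card Z * (\<Sum>\<omega>\<in>OmI n Vs K. PI n Vs K P \<omega> * f (mask Z \<omega>)))"
  proof (intro sum.cong refl)
    fix Z assume Z: "Z \<in> Pow {..<n}"
    then have cz: "card Z \<le> n" using card_mono[of "{..<n}" Z] by auto
    have "(\<Sum>\<omega>\<in>OmI n Vs K. P \<omega> * f (mask Z \<omega>)) = lm ^ n * (\<Sum>\<omega>\<in>OmI n Vs K. PI n Vs K P \<omega> * f (mask Z \<omega>))"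
      unfolding sum_distrib_left by (intro sum.cong refl) (simp add: PI_OmI)
    moreover have "lm ^ n = lm ^ card Z * lm ^ (n - card Z)" using cz by (simp add: power_add[symmetric])
    ultimately show "((1 - lm) / lm) ^ card Z * (\<Sum>\<omega>\<in>OmI n Vs K. P \<omega> * f (mask Z \<omega>))
       = lm ^ (n - card Z) * (1 - lm) ^ card Z * (\<Sum>\<omega>\<in>OmI n Vs K. PI n Vs K P \<omega> * f (mask Z \<omega>))"
      using lpos hlp3[of lm "((1 - lm) / lm) ^ card Z * (\<Sum>\<omega>\<in>OmI n Vs K. P \<omega> * f (mask Z \<omega>))" "1 - lm" "card Z"] by (simp add: mult.assoc)
  qed
  finally show ?thesis .
qed


lemma FIXk:
  assumes supp: "\<And>Z \<omega>. Z \<subseteq> {..<n} \<Longrightarrow> \<omega> \<in> OmI n Vs K \<Longrightarrow> card Z \<noteq> k \<Longrightarrow> f (mask Z \<omega>) = 0"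
  shows "(\<Sum>\<omega>\<in>Om n Vs K. P \<omega> * f \<omega>)
     = lm ^ (n - k) * (1 - lm) ^ k * (\<Sum>Z\<in>Pow {..<n}. \<Sum>\<omega>\<in>OmI n Vs K. PI n Vs K P \<omega> * f (mask Z \<omega>))"
proof -
  have "(\<Sum>\<omega>\<in>Om n Vs K. P \<omega> * f \<omega>) = (\<Sum>Z\<in>Pow {..<n}. lm ^ (n - card Z) * (1 - lm) ^ card Z * (\<Sum>\<omega>\<in>OmI n Vs K. PI n Vs K P \<omega> * f (mask Z \<omega>)))"
    by (rule REP)
  also have "\<dots> = (\<Sum>Z\<in>Pow {..<n}. lm ^ (n - k) * (1 - lm) ^ k * (\<Sum>\<omega>\<in>OmI n Vs K. PI n Vs K P \<omega> * f (mask Z \<omega>)))"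
  proof (intro sum.cong refl)
    fix Z assume Z: "Z \<in> Pow {..<n}"
    show "lm ^ (n - card Z) * (1 - lm) ^ card Z * (\<Sum>\<omega>\<in>OmI n Vs K. PI n Vs K P \<omega> * f (mask Z \<omega>))
       = lm ^ (n - k) * (1 - lm) ^ k * (\<Sum>\<omega>\<in>OmI n Vs K. PI n Vs K P \<omega> * f (mask Z \<omega>))"
    proof (cases "card Z = k")
      case False
      then have "(\<Sum>\<omega>\<in>OmI n Vs K. PI n Vs K P \<omega> * f (mask Z \<omega>)) = 0"
        using supp Z by (intro sum.neutral) auto
      then show ?thesis by simp
    qed simp
  qed
  finally show ?thesis by (simp add: sum_distrib_left)
qed

lemma PAT:
  assumes c: "\<And>Z \<omega>. Z \<subseteq> {..<n} \<Longrightarrow> \<omega> \<in> OmI n Vs K \<Longrightarrow> f (mask Z \<omega>) = c Z"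
  shows "(\<Sum>\<omega>\<in>Om n Vs K. P \<omega> * f \<omega>) = (\<Sum>Z\<in>Pow {..<n}. lm ^ (n - card Z) * (1 - lm) ^ card Z * c Z)"
  unfolding REP
proof (intro sum.cong refl)
  fix Z assume Z: "Z \<in> Pow {..<n}"
  have "(\<Sum>\<omega>\<in>OmI n Vs K. PI n Vs K P \<omega> * f (mask Z \<omega>)) = (\<Sum>\<omega>\<in>OmI n Vs K. PI n Vs K P \<omega>) * c Z"
    unfolding sum_distrib_right using c Z by (intro sum.cong refl) auto
  then show "lm ^ (n - card Z) * (1 - lm) ^ card Z * (\<Sum>\<omega>\<in>OmI n Vs K. PI n Vs K P \<omega> * f (mask Z \<omega>))
     = lm ^ (n - card Z) * (1 - lm) ^ card Z * c Z" using sum_PI by simp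
qed

lemma mask_insert: "mask (insert i Z) \<omega> = (fst (mask Z \<omega>), (snd (mask Z \<omega>))(i := 0))"
  unfolding mask_def by auto

lemma REPi:
  assumes i: "i < n" and inv: "\<And>v s t. f (v, s(i := t)) = f (v, s)"
  shows "(\<Sum>\<omega>\<in>Om n Vs K. P \<omega> * f \<omega>)
     = (\<Sum>Z\<in>Pow ({..<n} - {i}). lm ^ (n - 1 - card Z) * (1 - lm) ^ card Z * (\<Sum>\<omega>\<in>OmI n Vs K. PI n Vs K P \<omega> * f (mask Z \<omega>)))"
proof -
  define Oth where "Oth = {..<n} - {i}"
  define W where "W Z = (\<Sum>\<omega>\<in>OmI n Vs K. PI n Vs K P \<omega> * f (mask Z \<omega>))" for Z
  define w where "w Z = lm ^ (n - card Z) * (1 - lm) ^ card Z" for Z :: "nat set"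
  have U: "{..<n} = insert i Oth" using i unfolding Oth_def by auto
  have iO: "i \<notin> Oth" unfolding Oth_def by auto
  have fO: "finite Oth" unfolding Oth_def by auto
  have WI: "W (insert i Z) = W Z" for Z :: "nat set"
    unfolding W_def mask_insert using inv by (metis prod.collapse)
  have "(\<Sum>\<omega>\<in>Om n Vs K. P \<omega> * f \<omega>) = (\<Sum>Z\<in>Pow {..<n}. w Z * W Z)"
    unfolding REP w_def W_def ..
  also have "\<dots> = (\<Sum>Z\<in>Pow Oth. w Z * W Z) + (\<Sum>Z\<in>insert i ` Pow Oth. w Z * W Z)"
    unfolding U Pow_insert
    by (rule sum.union_disjoint) (use iO fO in auto)
  also have "(\<Sum>Z\<in>insert i ` Pow Oth. w Z * W Z) = (\<Sum>Z\<in>Pow Oth. w (insert i Z) * W (insert i Z))"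
    by (subst sum.reindex) (use iO in \<open>auto simp: inj_on_def insert_ident\<close>)
  also have "(\<Sum>Z\<in>Pow Oth. w Z * W Z) + (\<Sum>Z\<in>Pow Oth. w (insert i Z) * W (insert i Z))
      = (\<Sum>Z\<in>Pow Oth. lm ^ (n - 1 - card Z) * (1 - lm) ^ card Z * W Z)"
    unfolding sum.distrib[symmetric]
  proof (intro sum.cong refl)
    fix Z assume Z: "Z \<in> Pow Oth"
    have fZ: "finite Z" using Z fO finite_subset by auto
    have iZ: "i \<notin> Z" using Z iO by auto
    have cZ: "card Z \<le> n - 1" using card_mono[OF fO, of Z] Z unfolding Oth_def using i by auto
    then have e1: "n - card Z = Suc (n - 1 - card Z)" using i by auto
    have e2: "n - card (insert i Z) = n - 1 - card Z" using fZ iZ by simp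
    have "w Z + w (insert i Z) = lm ^ (n - 1 - card Z) * (1 - lm) ^ card Z"
      unfolding w_def e2 using fZ iZ unfolding e1 by (simp add: algebra_simps)
    then show "w Z * W Z + w (insert i Z) * W (insert i Z) = lm ^ (n - 1 - card Z) * (1 - lm) ^ card Z * W Z"
      unfolding WI by (metis distrib_right)
  qed
  finally show ?thesis unfolding Oth_def W_def .
qed

lemma FIXi:
  assumes i: "i < n" and inv: "\<And>v s t. f (v, s(i := t)) = f (v, s)"
    and supp: "\<And>Z \<omega>. Z \<subseteq> {..<n} - {i} \<Longrightarrow> \<omega> \<in> OmI n Vs K \<Longrightarrow> card Z \<noteq> k \<Longrightarrow> f (mask Z \<omega>) = 0"
  shows "(\<Sum>\<omega>\<in>Om n Vs K. P \<omega> * f \<omega>)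
     = lm ^ (n - 1 - k) * (1 - lm) ^ k * (\<Sum>Z\<in>Pow ({..<n} - {i}). \<Sum>\<omega>\<in>OmI n Vs K. PI n Vs K P \<omega> * f (mask Z \<omega>))"
proof -
  have "(\<Sum>\<omega>\<in>Om n Vs K. P \<omega> * f \<omega>) = (\<Sum>Z\<in>Pow ({..<n} - {i}). lm ^ (n - 1 - card Z) * (1 - lm) ^ card Z * (\<Sum>\<omega>\<in>OmI n Vs K. PI n Vs K P \<omega> * f (mask Z \<omega>)))"
    by (rule REPi[OF i inv])
  also have "\<dots> = (\<Sum>Z\<in>Pow ({..<n} - {i}). lm ^ (n - 1 - k) * (1 - lm) ^ k * (\<Sum>\<omega>\<in>OmI n Vs K. PI n Vs K P \<omega> * f (mask Z \<omega>)))"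
  proof (intro sum.cong refl)
    fix Z assume Z: "Z \<in> Pow ({..<n} - {i})"
    show "lm ^ (n - 1 - card Z) * (1 - lm) ^ card Z * (\<Sum>\<omega>\<in>OmI n Vs K. PI n Vs K P \<omega> * f (mask Z \<omega>))
       = lm ^ (n - 1 - k) * (1 - lm) ^ k * (\<Sum>\<omega>\<in>OmI n Vs K. PI n Vs K P \<omega> * f (mask Z \<omega>))"
    proof (cases "card Z = k")
      case False
      then have "(\<Sum>\<omega>\<in>OmI n Vs K. PI n Vs K P \<omega> * f (mask Z \<omega>)) = 0"
        using supp Z by (intro sum.neutral) auto
      then show ?thesis by simp
    qed simp
  qed
  finally show ?thesis by (simp add: sum_distrib_left)
qed

lemma REPc:
  assumes j: "j < n"
    and c: "\<And>Z \<omega>. Z \<subseteq> {..<n} \<Longrightarrow> \<omega> \<in> OmI n Vs K \<Longrightarrow> f (mask Z \<omega>) = (if j \<in> Z then 0 else f \<omega>)"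
  shows "(\<Sum>\<omega>\<in>Om n Vs K. P \<omega> * f \<omega>)
     = (\<Sum>Z\<in>Pow {..<n}. if j \<in> Z then 0 else lm ^ (n - card Z) * (1 - lm) ^ card Z) * (\<Sum>\<omega>\<in>OmI n Vs K. PI n Vs K P \<omega> * f \<omega>)"
  unfolding REP sum_distrib_right
proof (intro sum.cong refl)
  fix Z assume Z: "Z \<in> Pow {..<n}"
  show "lm ^ (n - card Z) * (1 - lm) ^ card Z * (\<Sum>\<omega>\<in>OmI n Vs K. PI n Vs K P \<omega> * f (mask Z \<omega>))
     = (if j \<in> Z then 0 else lm ^ (n - card Z) * (1 - lm) ^ card Z) * (\<Sum>\<omega>\<in>OmI n Vs K. PI n Vs K P \<omega> * f \<omega>)"
    using c Z by (cases "j \<in> Z") auto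
qed

lemma cpos:
  assumes "lm \<le> 1"
  shows "0 < (\<Sum>Z\<in>Pow {..<n}. if j \<in> Z then 0 else lm ^ (n - card Z) * (1 - lm) ^ card Z)"
proof -
  have "0 < (\<Sum>Z\<in>{{}}. if j \<in> Z then 0 else lm ^ (n - card Z) * (1 - lm) ^ card Z)"
    using lpos by simp
  also have "\<dots> \<le> (\<Sum>Z\<in>Pow {..<n}. if j \<in> Z then 0 else lm ^ (n - card Z) * (1 - lm) ^ card Z)"
    by (rule sum_mono2) (use assms lpos in auto)
  finally show ?thesis .
qed


lemma part_a:
  assumes i: "i < n"
  shows "cprob n Vs K P {\<omega>. Mcnt n i \<omega> = m} {\<omega>. snd \<omega> i = 0}
    = (\<Sum>Z\<in>Pow {..<n}. lm ^ (n - card Z) * (1 - lm) ^ card Z * (if i \<in> Z \<and> card ({..<n} - {i} - Z) = m then 1 else 0))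
    / (\<Sum>Z\<in>Pow {..<n}. lm ^ (n - card Z) * (1 - lm) ^ card Z * (if i \<in> Z then 1 else 0))"
proof -
  have 1: "prb n Vs K P ({\<omega>. Mcnt n i \<omega> = m} \<inter> {\<omega>. snd \<omega> i = 0})
    = (\<Sum>Z\<in>Pow {..<n}. lm ^ (n - card Z) * (1 - lm) ^ card Z * (if i \<in> Z \<and> card ({..<n} - {i} - Z) = m then 1 else 0))"
    unfolding prb_ind[OF fin]
    by (rule PAT) (use i in \<open>auto simp: Mcnt_mask snd_mask\<close>)
  have 2: "prb n Vs K P {\<omega>. snd \<omega> i = 0}
    = (\<Sum>Z\<in>Pow {..<n}. lm ^ (n - card Z) * (1 - lm) ^ card Z * (if i \<in> Z then 1 else 0))"
    unfolding prb_ind[OF fin]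
    by (rule PAT) (use i in \<open>auto simp: snd_mask\<close>)
  show ?thesis unfolding cprob_def 1 2 ..
qed

lemma cexp_gn:
  assumes j: "j < n" and k: "k \<noteq> 0" and l1: "lm \<le> 1"
  shows "cexp n Vs K P (Vd j) {\<omega>. snd \<omega> j = k}
    = (\<Sum>\<omega>\<in>OmI n Vs K. PI n Vs K P \<omega> * (if snd \<omega> j = k then Vd j \<omega> else 0))
    / (\<Sum>\<omega>\<in>OmI n Vs K. PI n Vs K P \<omega> * (if snd \<omega> j = k then 1 else 0))"
proof -
  define c where "c = (\<Sum>Z\<in>Pow {..<n}. if j \<in> Z then 0 else lm ^ (n - card Z) * (1 - lm) ^ card Z)"
  have c: "c > 0" unfolding c_def by (rule cpos[OF l1])
  have sm: "snd (mask Z \<omega>) j = (if j \<in> Z then 0 else snd \<omega> j)" for Z \<omega> unfolding mask_def by simp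
  have 1: "(\<Sum>\<omega>\<in>Om n Vs K \<inter> {\<omega>. snd \<omega> j = k}. P \<omega> * Vd j \<omega>)
     = c * (\<Sum>\<omega>\<in>OmI n Vs K. PI n Vs K P \<omega> * (if snd \<omega> j = k then Vd j \<omega> else 0))"
    unfolding sum_ind[OF fin] c_def mem_Collect_eq
    by (rule REPc[OF j]) (use k in \<open>auto simp: sm Vd_mask\<close>)
  have 2: "prb n Vs K P {\<omega>. snd \<omega> j = k}
     = c * (\<Sum>\<omega>\<in>OmI n Vs K. PI n Vs K P \<omega> * (if snd \<omega> j = k then 1 else 0))"
    unfolding prb_ind[OF fin] c_def mem_Collect_eq
    by (rule REPc[OF j]) (use k in \<open>auto simp: sm\<close>)
  show ?thesis unfolding cexp_def 1 2 using c by simp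
qed

lemma Zfun_rep:
  assumes i: "i < n" and l1: "lm < 1"
  shows "Zfun n Vs K P i g m =
    ((\<Sum>Z\<in>Pow ({..<n} - {i}). \<Sum>\<omega>\<in>OmI n Vs K. PI n Vs K P \<omega> * (if mask Z \<omega> \<in> {\<omega>. Gcnt n Vs K P i \<omega> = g} \<inter> {\<omega>. Mcnt n i \<omega> = m} then 1 else 0))
    / (\<Sum>Z\<in>Pow ({..<n} - {i}). \<Sum>\<omega>\<in>OmI n Vs K. PI n Vs K P \<omega> * (if mask Z \<omega> \<in> {\<omega>. Mcnt n i \<omega> = m} then 1 else 0)))
    * ((\<Sum>Z\<in>Pow {..<n}. \<Sum>\<omega>\<in>OmI n Vs K. PI n Vs K P \<omega> * (if mask Z \<omega> \<in> Ev n Vs K P i g m then Vd i (mask Z \<omega>) else 0))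
    / (\<Sum>Z\<in>Pow {..<n}. \<Sum>\<omega>\<in>OmI n Vs K. PI n Vs K P \<omega> * (if mask Z \<omega> \<in> Ev n Vs K P i g m then 1 else 0)))"
proof -
  define k where "k = n - 1 - m"
  define c where "c = lm ^ (n - 1 - k) * (1 - lm) ^ k"
  have c: "c \<noteq> 0" unfolding c_def using lpos l1 by simp
  define k2 where "k2 = n - m"
  define c2 where "c2 = lm ^ (n - k2) * (1 - lm) ^ k2"
  have c2: "c2 \<noteq> 0" unfolding c2_def using lpos l1 by simp
  have supp1: "card Z = k" if "Z \<subseteq> {..<n} - {i}" "\<omega> \<in> OmI n Vs K" "Mcnt n i (mask Z \<omega>) = m" for Z \<omega>
  proof -
    have "card Z \<le> n - 1" using card_mono[of "{..<n} - {i}" Z] that i by auto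
    then show ?thesis using that card_rest[OF i that(1)] Mcnt_mask[OF that(2)] unfolding k_def by auto
  qed
  have supp2: "card Z = k2" if "Z \<subseteq> {..<n}" "\<omega> \<in> OmI n Vs K" "mask Z \<omega> \<in> Ev n Vs K P i g m" for Z \<omega>
  proof -
    have iZ: "i \<in> Z" using that snd_mask[OF that(2) i] unfolding Ev_def by auto
    have sub: "Z - {i} \<subseteq> {..<n} - {i}" using that by auto
    have "{..<n} - {i} - Z = {..<n} - {i} - (Z - {i})" by auto
    then have "card ({..<n} - {i} - (Z - {i})) = m" using that Mcnt_mask[OF that(2)] unfolding Ev_def by auto
    then have "n - 1 - card (Z - {i}) = m" using card_rest[OF i sub] by simp
    moreover have "card (Z - {i}) \<le> n - 1" using card_mono[OF _ sub] i by (simp add: card_Diff_singleton)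
    moreover have "card Z = Suc (card (Z - {i}))" using iZ that(1) finite_subset
      by (metis card.remove finite_lessThan)
    ultimately show ?thesis unfolding k2_def using i by auto
  qed
  have inv1: "(if (v, s(i := t)) \<in> X then 1 else 0) = (if (v, s) \<in> X then (1::real) else 0)"
    if "X = {\<omega>. Gcnt n Vs K P i \<omega> = g} \<inter> {\<omega>. Mcnt n i \<omega> = m} \<or> X = {\<omega>. Mcnt n i \<omega> = m}" for v s t X
    using that by (auto simp: Gcnt_upd Mcnt_upd)
  have A1: "prb n Vs K P ({\<omega>. Gcnt n Vs K P i \<omega> = g} \<inter> {\<omega>. Mcnt n i \<omega> = m})
    = c * (\<Sum>Z\<in>Pow ({..<n} - {i}). \<Sum>\<omega>\<in>OmI n Vs K. PI n Vs K P \<omega> * (if mask Z \<omega> \<in> {\<omega>. Gcnt n Vs K P i \<omega> = g} \<inter> {\<omega>. Mcnt n i \<omega> = m} then 1 else 0))"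
    unfolding prb_ind[OF fin] c_def
  proof (rule FIXi[OF i])
    fix v s t show "(if (v, s(i := t)) \<in> {\<omega>. Gcnt n Vs K P i \<omega> = g} \<inter> {\<omega>. Mcnt n i \<omega> = m} then 1 else 0) = (if (v, s) \<in> {\<omega>. Gcnt n Vs K P i \<omega> = g} \<inter> {\<omega>. Mcnt n i \<omega> = m} then (1::real) else 0)"
      by (simp add: Gcnt_upd Mcnt_upd)
  next
    fix Z \<omega> assume "Z \<subseteq> {..<n} - {i}" "\<omega> \<in> OmI n Vs K" "card Z \<noteq> k"
    then show "(if mask Z \<omega> \<in> {\<omega>. Gcnt n Vs K P i \<omega> = g} \<inter> {\<omega>. Mcnt n i \<omega> = m} then 1 else 0) = (0::real)" using supp1[of Z \<omega>] by auto
  qed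
  have B1: "prb n Vs K P {\<omega>. Mcnt n i \<omega> = m}
    = c * (\<Sum>Z\<in>Pow ({..<n} - {i}). \<Sum>\<omega>\<in>OmI n Vs K. PI n Vs K P \<omega> * (if mask Z \<omega> \<in> {\<omega>. Mcnt n i \<omega> = m} then 1 else 0))"
    unfolding prb_ind[OF fin] c_def
  proof (rule FIXi[OF i])
    fix v s t show "(if (v, s(i := t)) \<in> {\<omega>. Mcnt n i \<omega> = m} then 1 else 0) = (if (v, s) \<in> {\<omega>. Mcnt n i \<omega> = m} then (1::real) else 0)"
      by (simp add: Gcnt_upd Mcnt_upd)
  next
    fix Z \<omega> assume "Z \<subseteq> {..<n} - {i}" "\<omega> \<in> OmI n Vs K" "card Z \<noteq> k"
    then show "(if mask Z \<omega> \<in> {\<omega>. Mcnt n i \<omega> = m} then 1 else 0) = (0::real)" using supp1[of Z \<omega>] by auto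
  qed
  have A2: "(\<Sum>\<omega>\<in>Om n Vs K \<inter> Ev n Vs K P i g m. P \<omega> * Vd i \<omega>)
    = c2 * (\<Sum>Z\<in>Pow {..<n}. \<Sum>\<omega>\<in>OmI n Vs K. PI n Vs K P \<omega> * (if mask Z \<omega> \<in> Ev n Vs K P i g m then Vd i (mask Z \<omega>) else 0))"
    unfolding sum_ind[OF fin] c2_def
    by (rule FIXk) (use supp2 in auto)
  have B2: "prb n Vs K P (Ev n Vs K P i g m)
    = c2 * (\<Sum>Z\<in>Pow {..<n}. \<Sum>\<omega>\<in>OmI n Vs K. PI n Vs K P \<omega> * (if mask Z \<omega> \<in> Ev n Vs K P i g m then 1 else 0))"
    unfolding prb_ind[OF fin] c2_def
    by (rule FIXk) (use supp2 in auto)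
  show ?thesis unfolding Zfun_def cprob_def cexp_def A1 B1 A2 B2 using c c2 by simp
qed

end

end


context vm
begin

lemma cexp_perm:
  assumes p: "p permutes {..<n}"
  shows "cexp n Vs K P (Vd j) {\<omega>. snd \<omega> j = k} = cexp n Vs K P (Vd (p j)) {\<omega>. snd \<omega> (p j) = k}"
proof -
  have e: "{\<omega>. Tp p \<omega> \<in> {\<omega>. snd \<omega> j = k}} = {\<omega>. snd \<omega> (p j) = k}" by (auto simp: Tp_def)
  have v: "Vd j (Tp p \<omega>) = Vd (p j) \<omega>" for \<omega> by (simp add: Vd_def Tp_def)
  show ?thesis unfolding cexp_def
    using sum_Tp[OF p exch, where E="{\<omega>. snd \<omega> j = k}" and f="Vd j"] prb_Tp[OF p, of "{\<omega>. snd \<omega> j = k}"]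
    unfolding e v by simp
qed

lemma gn_perm:
  assumes p: "p permutes {..<n}"
  shows "good_news n Vs K P (p j) k = good_news n Vs K P j k"
  unfolding good_news_def using cexp_perm[OF p, of j k] by simp

lemma Gcnt_Tp:
  assumes p: "p permutes {..<n}" and pi: "p i = i"
  shows "Gcnt n Vs K P i (Tp p \<omega>) = Gcnt n Vs K P i \<omega>"
  unfolding Gcnt_def
  by (rule card_perm[OF p pi]) (simp add: Tp_def gn_perm[OF p])

lemma Mcnt_Tp:
  assumes p: "p permutes {..<n}" and pi: "p i = i"
  shows "Mcnt n i (Tp p \<omega>) = Mcnt n i \<omega>"
  unfolding Mcnt_def
  by (rule card_perm[OF p pi]) (simp add: Tp_def)

lemma Uset_Tp:
  assumes p: "p permutes {..<n}" and pi: "p i = i"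
  shows "p ` Uset n i (Tp p \<omega>) = Uset n i \<omega>"
proof (intro set_eqI iffI)
  have inj: "inj p" using permutes_inj[OF p] .
  fix x
  show "x \<in> p ` Uset n i (Tp p \<omega>) \<Longrightarrow> x \<in> Uset n i \<omega>"
    using permutes_in_image[OF p] pi inj unfolding Uset_def Tp_def by (auto dest: injD)
  assume x: "x \<in> Uset n i \<omega>"
  define j where "j = inv p x"
  have xj: "x = p j" unfolding j_def using permutes_inverses[OF p] by simp
  have "j \<in> Uset n i (Tp p \<omega>)" using x xj permutes_in_image[OF p, of j] pi unfolding Uset_def Tp_def by auto
  then show "x \<in> p ` Uset n i (Tp p \<omega>)" using xj by blast
qed

lemma pr_perm:
  assumes p: "p permutes {..<n}" and pi: "p i = i"
  shows "prb n Vs K P (Ev n Vs K P i g m \<inter> {\<omega>. Uset n i \<omega> = Y})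
       = prb n Vs K P (Ev n Vs K P i g m \<inter> {\<omega>. Uset n i \<omega> = p ` Y})"
proof -
  have inj: "inj p" using permutes_inj[OF p] .
  have "{\<omega>. Tp p \<omega> \<in> Ev n Vs K P i g m \<inter> {\<omega>. Uset n i \<omega> = Y}} = Ev n Vs K P i g m \<inter> {\<omega>. Uset n i \<omega> = p ` Y}"
  proof (intro set_eqI)
    fix \<omega>
    have e1: "(Uset n i (Tp p \<omega>) = Y) = (p ` Uset n i (Tp p \<omega>) = p ` Y)"
      by (rule inj_image_eq_iff[OF inj, symmetric])
    have e2: "(Uset n i (Tp p \<omega>) = Y) = (Uset n i \<omega> = p ` Y)" unfolding e1 Uset_Tp[OF p pi] ..
    have s: "snd (Tp p \<omega>) i = snd \<omega> i" using pi by (simp add: Tp_def)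
    have e3: "(Tp p \<omega> \<in> Ev n Vs K P i g m) = (\<omega> \<in> Ev n Vs K P i g m)"
      unfolding Ev_def mem_Collect_eq Gcnt_Tp[OF p pi] Mcnt_Tp[OF p pi] s ..
    show "\<omega> \<in> {\<omega>. Tp p \<omega> \<in> Ev n Vs K P i g m \<inter> {\<omega>. Uset n i \<omega> = Y}} \<longleftrightarrow> \<omega> \<in> Ev n Vs K P i g m \<inter> {\<omega>. Uset n i \<omega> = p ` Y}"
      using e2 e3 by simp
  qed
  then show ?thesis using prb_Tp[OF p, of "Ev n Vs K P i g m \<inter> {\<omega>. Uset n i \<omega> = Y}"] by simp
qed

lemma pr_const:
  assumes i: "i < n" and Y: "Y \<subseteq> {..<n} - {i}" and Y': "Y' \<subseteq> {..<n} - {i}" and c: "card Y = card Y'"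
  shows "prb n Vs K P (Ev n Vs K P i g m \<inter> {\<omega>. Uset n i \<omega> = Y})
       = prb n Vs K P (Ev n Vs K P i g m \<inter> {\<omega>. Uset n i \<omega> = Y'})"
proof -
  obtain p where p: "p permutes {..<n}" "p i = i" "p ` Y = Y'" using perm_exists[OF i Y Y' c] by blast
  show ?thesis using pr_perm[OF p(1,2), of g m Y] unfolding p(3) .
qed

lemma pivot_rep:
  assumes i: "i < n" and g: "g \<le> tau n" and pos: "prb n Vs K P (Ev n Vs K P i g m) > 0"
  shows "pivot_prob n Vs K P \<sigma> i g m
     = (\<Sum>Y\<in>{Y. Y \<subseteq> {..<n} - {i} \<and> card Y = n - 1 - m}. exact_yes \<sigma> Y (tau n - g))
       / card {Y. Y \<subseteq> {..<n} - {i} \<and> card Y = n - 1 - m}"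
proof -
  define S where "S = {Y. Y \<subseteq> {..<n} - {i} \<and> card Y = n - 1 - m}"
  define E where "E = Ev n Vs K P i g m"
  define pr where "pr Y = prb n Vs K P (E \<inter> {\<omega>. Uset n i \<omega> = Y})" for Y
  define h where "h Y = exact_yes \<sigma> Y (tau n - g)" for Y
  have fS: "finite S" unfolding S_def by (rule finite_subset[of _ "Pow ({..<n} - {i})"]) auto
  have US: "Uset n i \<omega> \<in> S" if "\<omega> \<in> E" for \<omega>
    using that card_Uset[OF i, of \<omega>] unfolding S_def E_def Ev_def Uset_def by auto
  have grp: "(\<Sum>\<omega>\<in>Om n Vs K \<inter> E. P \<omega> * F (Uset n i \<omega>)) = (\<Sum>Y\<in>S. F Y * pr Y)" for F :: "nat set \<Rightarrow> real"
  proof -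
    have "(\<Sum>\<omega>\<in>Om n Vs K \<inter> E. P \<omega> * F (Uset n i \<omega>))
        = (\<Sum>Y\<in>S. \<Sum>\<omega>\<in>{\<omega>. \<omega> \<in> Om n Vs K \<inter> E \<and> Uset n i \<omega> = Y}. P \<omega> * F (Uset n i \<omega>))"
      by (rule sum.group[symmetric]) (use finOm fS US in auto)
    also have "\<dots> = (\<Sum>Y\<in>S. F Y * pr Y)"
    proof (intro sum.cong refl)
      fix Y
      have "{\<omega>. \<omega> \<in> Om n Vs K \<inter> E \<and> Uset n i \<omega> = Y} = Om n Vs K \<inter> (E \<inter> {\<omega>. Uset n i \<omega> = Y})" by auto
      then show "(\<Sum>\<omega>\<in>{\<omega>. \<omega> \<in> Om n Vs K \<inter> E \<and> Uset n i \<omega> = Y}. P \<omega> * F (Uset n i \<omega>)) = F Y * pr Y"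
        unfolding pr_def prb_def by (simp add: sum_distrib_left mult.commute)
    qed
    finally show ?thesis .
  qed
  have num: "(\<Sum>\<omega>\<in>Om n Vs K \<inter> E. P \<omega> * (if Gcnt n Vs K P i \<omega> \<le> tau n
               then exact_yes \<sigma> {j. j < n \<and> j \<noteq> i \<and> snd \<omega> j = 0} (tau n - Gcnt n Vs K P i \<omega>) else 0))
      = (\<Sum>Y\<in>S. h Y * pr Y)"
  proof -
    have "(\<Sum>\<omega>\<in>Om n Vs K \<inter> E. P \<omega> * (if Gcnt n Vs K P i \<omega> \<le> tau n
               then exact_yes \<sigma> {j. j < n \<and> j \<noteq> i \<and> snd \<omega> j = 0} (tau n - Gcnt n Vs K P i \<omega>) else 0))
        = (\<Sum>\<omega>\<in>Om n Vs K \<inter> E. P \<omega> * h (Uset n i \<omega>))"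
      using g unfolding E_def Ev_def h_def Uset_def by (intro sum.cong refl) auto
    then show ?thesis using grp by simp
  qed
  have den: "prb n Vs K P E = (\<Sum>Y\<in>S. pr Y)"
    using grp[of "\<lambda>_. 1"] unfolding prb_def by simp
  have "S \<noteq> {}" using den pos unfolding E_def by auto
  then obtain Y0 where Y0: "Y0 \<in> S" by blast
  have prc: "pr Y = pr Y0" if "Y \<in> S" for Y
    unfolding pr_def E_def using pr_const[OF i, of Y Y0] that Y0 unfolding S_def by auto
  have den2: "prb n Vs K P E = pr Y0 * card S" using den prc by simp
  have num2: "(\<Sum>Y\<in>S. h Y * pr Y) = pr Y0 * (\<Sum>Y\<in>S. h Y)"
    using prc by (simp add: sum_distrib_left mult.commute)
  have nz: "pr Y0 \<noteq> 0" using den2 pos unfolding E_def by auto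
  show ?thesis unfolding pivot_prob_def E_def[symmetric] num num2 den2 S_def[symmetric] h_def[symmetric]
    using nz by simp
qed

end

theorem lemma1:
  fixes n K :: nat and Vs :: "(real \<times> real) set" and P :: "state \<Rightarrow> real"
  assumes "odd n"
    and "finite Vs"
    and "is_pmf n Vs K P"
    and "exchangeable n Vs K P"
    and "info_assumption n Vs K P"
    and "lam n Vs K P > 0"
  shows
   "(\<forall>\<omega>\<in>Om n Vs K.
        P \<omega> = lam n Vs K P ^ Msig n (snd \<omega>) * (1 - lam n Vs K P) ^ (n - Msig n (snd \<omega>))
               * (\<Sum>s'\<in>Cset n K (snd \<omega>). PI n Vs K P (fst \<omega>, s')))
    \<and> (\<forall>\<sigma> i g m. (\<forall>j<n. 0 \<le> \<sigma> j \<and> \<sigma> j \<le> 1) \<longrightarrow> i < n \<longrightarrow>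
          g \<le> tau n \<longrightarrow> g \<le> m \<longrightarrow> m \<le> tau n + g \<longrightarrow>
         (\<forall>P'. is_pmf n Vs K P' \<and> exchangeable n Vs K P' \<and> info_assumption n Vs K P' \<longrightarrow>
            (lam n Vs K P' = lam n Vs K P \<longrightarrow>
               cprob n Vs K P' {\<omega>. Mcnt n i \<omega> = m} {\<omega>. snd \<omega> i = 0}
               = cprob n Vs K P {\<omega>. Mcnt n i \<omega> = m} {\<omega>. snd \<omega> i = 0})
          \<and> (prb n Vs K P (Ev n Vs K P i g m) > 0 \<and> prb n Vs K P' (Ev n Vs K P' i g m) > 0 \<longrightarrow>
               pivot_prob n Vs K P' \<sigma> i g m = pivot_prob n Vs K P \<sigma> i g m)
          \<and> (lam n Vs K P < 1 \<and> 0 < lam n Vs K P' \<and> lam n Vs K P' < 1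
               \<and> (\<forall>\<omega>\<in>Om n Vs K. PI n Vs K P' \<omega> = PI n Vs K P \<omega>) \<longrightarrow>
               Zfun n Vs K P' i g m = Zfun n Vs K P i g m)))"
proof -
  note as = assms
  have npos: "0 < n" using assms(1) by (cases n) auto
  interpret vP: vm n Vs K P using assms npos by unfold_locales
  have lpos: "0 < lam n Vs K P" by (rule assms(6))
  have P1: "\<forall>\<omega>\<in>Om n Vs K.
        P \<omega> = lam n Vs K P ^ Msig n (snd \<omega>) * (1 - lam n Vs K P) ^ (n - Msig n (snd \<omega>))
               * (\<Sum>s'\<in>Cset n K (snd \<omega>). PI n Vs K P (fst \<omega>, s'))"
    using vP.part1[OF lpos] by blast
  have P2: "(\<forall>P'. is_pmf n Vs K P' \<and> exchangeable n Vs K P' \<and> info_assumption n Vs K P' \<longrightarrow>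
            (lam n Vs K P' = lam n Vs K P \<longrightarrow>
               cprob n Vs K P' {\<omega>. Mcnt n i \<omega> = m} {\<omega>. snd \<omega> i = 0}
               = cprob n Vs K P {\<omega>. Mcnt n i \<omega> = m} {\<omega>. snd \<omega> i = 0})
          \<and> (prb n Vs K P (Ev n Vs K P i g m) > 0 \<and> prb n Vs K P' (Ev n Vs K P' i g m) > 0 \<longrightarrow>
               pivot_prob n Vs K P' \<sigma> i g m = pivot_prob n Vs K P \<sigma> i g m)
          \<and> (lam n Vs K P < 1 \<and> 0 < lam n Vs K P' \<and> lam n Vs K P' < 1
               \<and> (\<forall>\<omega>\<in>Om n Vs K. PI n Vs K P' \<omega> = PI n Vs K P \<omega>) \<longrightarrow>
               Zfun n Vs K P' i g m = Zfun n Vs K P i g m))"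
    if i: "i < n" and g: "g \<le> tau n" for \<sigma> i g m
  proof (intro allI impI conjI)
    fix P' assume H: "is_pmf n Vs K P' \<and> exchangeable n Vs K P' \<and> info_assumption n Vs K P'"
    interpret vQ: vm n Vs K P' using H assms npos by unfold_locales auto
    {
      assume le: "lam n Vs K P' = lam n Vs K P"
      have lq: "0 < lam n Vs K P'" using le lpos by simp
      show "cprob n Vs K P' {\<omega>. Mcnt n i \<omega> = m} {\<omega>. snd \<omega> i = 0}
               = cprob n Vs K P {\<omega>. Mcnt n i \<omega> = m} {\<omega>. snd \<omega> i = 0}"
        unfolding vQ.part_a[OF lq i] vP.part_a[OF lpos i] le ..
    }
    {
      assume pp: "prb n Vs K P (Ev n Vs K P i g m) > 0 \<and> prb n Vs K P' (Ev n Vs K P' i g m) > 0"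
      show "pivot_prob n Vs K P' \<sigma> i g m = pivot_prob n Vs K P \<sigma> i g m"
        unfolding vQ.pivot_rep[OF i g conjunct2[OF pp]] vP.pivot_rep[OF i g conjunct1[OF pp]] ..
    }
    {
      assume cc: "lam n Vs K P < 1 \<and> 0 < lam n Vs K P' \<and> lam n Vs K P' < 1
               \<and> (\<forall>\<omega>\<in>Om n Vs K. PI n Vs K P' \<omega> = PI n Vs K P \<omega>)"
      have l1: "lam n Vs K P < 1" and lq: "0 < lam n Vs K P'" and lq1: "lam n Vs K P' < 1"
        using cc by auto
      have PIeq: "\<And>\<omega>. \<omega> \<in> OmI n Vs K \<Longrightarrow> PI n Vs K P' \<omega> = PI n Vs K P \<omega>"
        using cc unfolding OmI_def by auto
      have GN: "good_news n Vs K P' j k = good_news n Vs K P j k" if j: "j < n" for j k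
      proof (cases "k = 0")
        case True then show ?thesis unfolding good_news_def by simp
      next
        case False
        have "cexp n Vs K P' (Vd j) {\<omega>. snd \<omega> j = k} = cexp n Vs K P (Vd j) {\<omega>. snd \<omega> j = k}"
          unfolding vQ.cexp_gn[OF lq j False less_imp_le[OF lq1]] vP.cexp_gn[OF lpos j False less_imp_le[OF l1]]
          by (simp add: PIeq cong: sum.cong)
        then show ?thesis unfolding good_news_def by simp
      qed
      have GC: "Gcnt n Vs K P' i = Gcnt n Vs K P i"
      proof
        fix \<omega> :: state
        have "{j. j < n \<and> j \<noteq> i \<and> good_news n Vs K P' j (snd \<omega> j)} = {j. j < n \<and> j \<noteq> i \<and> good_news n Vs K P j (snd \<omega> j)}"
          using GN by auto
        then show "Gcnt n Vs K P' i \<omega> = Gcnt n Vs K P i \<omega>" unfolding Gcnt_def by simp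
      qed
      have EV: "Ev n Vs K P' i g m = Ev n Vs K P i g m" unfolding Ev_def GC ..
      show "Zfun n Vs K P' i g m = Zfun n Vs K P i g m"
        unfolding vQ.Zfun_rep[OF lq i lq1] vP.Zfun_rep[OF lpos i l1] GC EV
        by (simp add: PIeq cong: sum.cong)
    }
  qed
  show ?thesis using P1 P2 by blast
qed

end
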